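(* Let $m\ge n$, let $D$ be an $m\times n$ real matrix of rank $n$, and let $S$ be a compact subset of $\mathbb{R}^n_{>0}$. Then there exists a function $\alpha$ of class $\mathcal{K}_\infty$ such that $|D(\rho(x)-\rho(a))|^2\ge\alpha(|x-a|)$ for all $a\in S$ and all $x\in\mathbb{R}^n_{>0}$, where $\rho(x)=(\ln x_1,\dots,\ln x_n)'$.
   Context: $|\cdot|$ is the Euclidean norm; $\mathcal{K}_\infty$ is the class of continuous strictly increasing unbounded functions $[0,\infty)\to[0,\infty)$ vanishing at $0$. *)

theory Defs
  imports "HOL-Analysis.Analysis"
begin

definition class_K_inf :: "(real \<Rightarrow> real) \<Rightarrow> bool" where
  "class_K_inf \<alpha> \<longleftrightarrow>
     continuous_on {0..} \<alpha> \<and> strict_mono_on {0..} \<alpha> \<and>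
     \<alpha> 0 = 0 \<and> (\<forall>r\<ge>0. \<alpha> r \<ge> 0) \<and>
     (\<forall>M. \<exists>r\<ge>0. \<alpha> r > M)"

definition pos_orthant :: "(real ^ 'n) set" where
  "pos_orthant = {x. \<forall>i. x $ i > 0}"

definition rho :: "real ^ 'n \<Rightarrow> real ^ 'n" where
  "rho x = (\<chi> i. ln (x $ i))"

end

theory Submission
  imports Defs
begin

lemma ln_gap:
  fixes s t M :: real
  assumes s: "0 < s" "s \<le> M" and t: "0 < t"
  shows "ln (1 + \<bar>t - s\<bar> / M) \<le> \<bar>ln t - ln s\<bar>"
proof (cases "s \<le> t")
  case True
  have "1 + \<bar>t - s\<bar> / M \<le> 1 + (t - s) / s"
    using True s by (simp add: frac_le)
  also have "\<dots> = t / s" using s by (simp add: field_simps)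
  finally have "ln (1 + \<bar>t - s\<bar> / M) \<le> ln (t / s)"
    using s True by (subst ln_le_cancel_iff) (auto intro: add_pos_nonneg)
  also have "\<dots> = ln t - ln s" using s t by (simp add: ln_div)
  finally show ?thesis by linarith
next
  case False
  have M: "0 < M" using s by linarith
  have "ln (1 + \<bar>t - s\<bar> / M) \<le> \<bar>t - s\<bar> / M"
    using M by (intro ln_add_one_self_le_self) simp
  also have "\<dots> \<le> (s - t) / s" using False s by (simp add: frac_le)
  also have "\<dots> = - (t / s - 1)" using s by (simp add: field_simps)
  also have "\<dots> \<le> - ln (t / s)" using ln_le_minus_one[of "t/s"] s t by simp
  also have "\<dots> = ln s - ln t" using s t by (simp add: ln_div)
  finally show ?thesis by linarith
qed

lemma K_inf:
  fixes K L :: real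
  assumes "0 < K" "0 < L"
  shows "class_K_inf (\<lambda>r. K * (ln (1 + r / L))\<^sup>2)"
  unfolding class_K_inf_def
proof (intro conjI allI impI)
  show "continuous_on {0..} (\<lambda>r. K * (ln (1 + r / L))\<^sup>2)"
    using assms by (intro continuous_intros) (auto, smt (verit) divide_nonneg_pos)
  show "strict_mono_on {0..} (\<lambda>r. K * (ln (1 + r / L))\<^sup>2)"
  proof (rule strict_mono_onI)
    fix r s :: real assume "r \<in> {0..}" "s \<in> {0..}" "r < s"
    then have rs: "r / L < s / L" "0 \<le> r / L" using assms
      by (auto simp: divide_strict_right_mono)
    then have "ln (1 + r / L) < ln (1 + s / L)" "0 \<le> ln (1 + r / L)"
      by (subst ln_less_cancel_iff; linarith) (simp add: rs)
    then have "(ln (1 + r / L))\<^sup>2 < (ln (1 + s / L))\<^sup>2"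
      by (simp add: power_strict_mono)
    then show "K * (ln (1 + r / L))\<^sup>2 < K * (ln (1 + s / L))\<^sup>2"
      using assms by simp
  qed
  show "K * (ln (1 + 0 / L))\<^sup>2 = 0" by simp
  show "0 \<le> K * (ln (1 + r / L))\<^sup>2" for r using assms by simp
  fix M :: real
  define t where "t = \<bar>M\<bar> / K + 1"
  have t1: "1 \<le> t" using assms by (simp add: t_def)
  define r where "r = L * (exp t - 1)"
  have r0: "0 \<le> r" using t1 assms by (simp add: r_def)
  have "ln (1 + r / L) = t" using assms by (simp add: r_def)
  moreover have "t \<le> t\<^sup>2" using t1 by (simp add: power2_eq_square)
  moreover have "M < K * t" using assms by (simp add: t_def field_simps) (smt (verit) abs_ge_self mult_left_mono mult_pos_pos)
  ultimately have "M < K * (ln (1 + r / L))\<^sup>2" using assms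
    by (smt (verit) mult_left_mono)
  then show "\<exists>r\<ge>0. M < K * (ln (1 + r / L))\<^sup>2" using r0 by blast
qed

theorem lemmaA2:
  fixes D :: "real ^ 'n ^ 'm" and S :: "(real ^ 'n) set"
  assumes "CARD('m) \<ge> CARD('n)"
    and "rank D = CARD('n)"
    and "compact S" and "S \<subseteq> pos_orthant"
  shows "\<exists>\<alpha>. class_K_inf \<alpha> \<and>
           (\<forall>a\<in>S. \<forall>x\<in>pos_orthant. (norm (D *v (rho x - rho a)))\<^sup>2 \<ge> \<alpha> (norm (x - a)))"
proof -
  have "inj ((*v) D)" using assms(2) full_rank_injective by blast
  then obtain c where c: "c > 0" "\<And>v. c * norm v \<le> norm (D *v v)"
    using linear_inj_bounded_below_pos[of "(*v) D"] matrix_vector_mul_linear[of D]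
    by (metis (no_types, lifting) eta_contract_eq)
  obtain B where B: "\<And>a. a \<in> S \<Longrightarrow> norm a \<le> B"
    using compact_imp_bounded[OF assms(3)] bounded_iff by blast
  define M where "M = max B 1"
  have M0: "0 < M" by (simp add: M_def)
  define L where "L = real CARD('n) * M"
  have L0: "0 < L" using M0 by (simp add: L_def)
  define \<alpha> where "\<alpha> = (\<lambda>r. c\<^sup>2 * (ln (1 + r / L))\<^sup>2)"
  have K: "class_K_inf \<alpha>" unfolding \<alpha>_def using K_inf c(1) L0 by simp
  have "\<alpha> (norm (x - a)) \<le> (norm (D *v (rho x - rho a)))\<^sup>2"
    if a: "a \<in> S" and x: "x \<in> pos_orthant" for a x
  proof -
    define v where "v = x - a"
    obtain i where i: "\<And>j. \<bar>v $ j\<bar> \<le> \<bar>v $ i\<bar>"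
    proof -
      have "Max (range (\<lambda>j. \<bar>v $ j\<bar>)) \<in> range (\<lambda>j. \<bar>v $ j\<bar>)"
        by (rule Max_in) auto
      then obtain i where "Max (range (\<lambda>j. \<bar>v $ j\<bar>)) = \<bar>v $ i\<bar>" by (rule rangeE)
      moreover have "\<And>j. \<bar>v $ j\<bar> \<le> Max (range (\<lambda>j. \<bar>v $ j\<bar>))"
        by (rule Max_ge) auto
      ultimately show ?thesis using that by metis
    qed
    have "norm v \<le> (\<Sum>j\<in>UNIV. \<bar>v $ j\<bar>)" by (rule norm_le_l1_cart)
    also have "\<dots> \<le> (\<Sum>j\<in>(UNIV::'n set). \<bar>v $ i\<bar>)" by (rule sum_mono) (rule i)
    also have "\<dots> = real CARD('n) * \<bar>v $ i\<bar>" by simp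
    finally have nv: "norm v / L \<le> \<bar>v $ i\<bar> / M"
      using M0 by (simp add: L_def field_simps mult.commute)
    have ai: "0 < a $ i" "a $ i \<le> M"
      using a assms(4) B[OF a] component_le_norm_cart[of a i]
      by (auto simp: pos_orthant_def M_def)
    have xi: "0 < x $ i" using x by (simp add: pos_orthant_def)
    have l0: "0 \<le> ln (1 + norm v / L)" using L0 by simp
    have "ln (1 + norm v / L) \<le> ln (1 + \<bar>v $ i\<bar> / M)"
      using nv L0 M0 by (subst ln_le_cancel_iff) (auto intro: add_pos_nonneg)
    also have "\<dots> \<le> \<bar>ln (x $ i) - ln (a $ i)\<bar>"
      using ln_gap[OF ai xi] by (simp add: v_def)
    also have "\<dots> = \<bar>(rho x - rho a) $ i\<bar>" by (simp add: rho_def)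
    also have "\<dots> \<le> norm (rho x - rho a)" by (rule component_le_norm_cart)
    finally have "c * ln (1 + norm v / L) \<le> c * norm (rho x - rho a)"
      using c(1) by simp
    also have "\<dots> \<le> norm (D *v (rho x - rho a))" by (rule c(2))
    finally have "(c * ln (1 + norm v / L))\<^sup>2 \<le> (norm (D *v (rho x - rho a)))\<^sup>2"
      using l0 c(1) by (intro power_mono) auto
    then show ?thesis by (simp add: \<alpha>_def v_def power_mult_distrib)
  qed
  then show ?thesis using K by blast
qed

end
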